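(* Let $\varepsilon>0$, $u_0\in\mathcal V_{[0,1]}\setminus\{\mathbf 0,\mathbf 1\}$, and let $\tau_n\downarrow0$ with $\tau_n<\varepsilon$ be such that for every $t\ge0$ the limit $\hat u(t):=\lim_{n\to\infty}u^{[\tau_n]}_{\lceil t/\tau_n\rceil}$ exists and $\hat u$ is (together with some $\gamma$) a solution of mass-conserving double-obstacle AC flow on $[0,\infty)$ with $\hat u(0)=u_0$. Then for all $t>s\ge0$, \[ \mathrm{GL}_\varepsilon(\hat u(s)) - \mathrm{GL}_\varepsilon(\hat u(t)) \geq \frac{1}{2(t-s)} \|\hat u(s) -\hat u(t) \|_{\mathcal V}^2; \] in particular $t\mapsto\mathrm{GL}_\varepsilon(\hat u(t))$ is monotonically non-increasing.
   Context: $G=(V,E)$ is a finite, simple, connected, undirected graph with weights $\omega_{ij}=\omega_{ji}>0$ for $ij\in E$, $\omega_{ij}=0$ otherwise; $d_i=\sum_j\omega_{ij}$, $r\in[0,1]$ fixed. $\mathcal V$ = functions $V\to\mathbb R$ with $\langle u,v\rangle_{\mathcal V}=\sum_i u_iv_id_i^r$ and norm $\|\cdot\|_{\mathcal V}$; $\mathcal V_{[0,1]}$ = functions $V\to[0,1]$. $\mathcal E$ = functions on $E$ with $\langle\varphi,\phi\rangle_{\mathcal E}=\frac12\sum_{i,j}\varphi_{ij}\phi_{ij}\omega_{ij}$, $(\nabla u)_{ij}=u_j-u_i$ if $ij\in E$, else $0$. $(\Delta u)_i=d_i^{-r}\sum_j\omega_{ij}(u_i-u_j)$, $e^{-\tau\Delta}$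 its matrix exponential. $\mathbf 1$ all-ones, $\mathbf 0$ zero function; $\mathcal M(u)=\langle u,\mathbf 1\rangle_{\mathcal V}$; $\bar v=\mathcal M(v)/\mathcal M(\mathbf 1)$. Ginzburg–Landau functional: $\mathrm{GL}_\varepsilon(u)=\frac12\|\nabla u\|_{\mathcal E}^2+\frac1\varepsilon\sum_i d_i^rW(u_i)$ with $W(x)=\frac12x(1-x)$ for $x\in[0,1]$ and $W(x)=\infty$ otherwise. For $u\in\mathcal V_{[0,1]}$, $\mathcal B(u)$ = set of $\beta\in\mathcal V$ with $\beta_i\ge0$ if $u_i=0$, $\beta_i=0$ if $0<u_i<1$, $\beta_i\le0$ if $u_i=1$. Semi-discrete iterates with time step $\tau$, $\lambda=\tau/\varepsilon$ and initial state $u_0$: $u^{[\tau]}_0=u_0$ and for $m\ge0$, some $\beta^{[\tau]}_{m+1}\in\mathcal B(u^{[\tau]}_{m+1})$ with $u^{[\tau]}_{m+1} -e^{-\tau\Delta}u^{[\tau]}_m-\lambda u^{[\tau]}_{m+1}+\lambda\overline{u^{[\tau]}_{m+1}}\mathbf{1} =\lambda\beta^{[\tau]}_{m+1} -\lambda\overline{\beta^{[\tau]}_{m+1}}\mathbf{1}$ (for $\tau<\varepsilon$ the $u^{[\tau]}_m$ are uniquely determined). A pair $(u,\beta)$ is a solution to mass-conserving double-obstacle AC flow on $[0,\infty)$ if $u\in H^1_{loc}\cap C^0$, $u(t)\in\mathcal V_{[0,1]}$, and for a.e. $t$: $\varepsilon \frac{du}{dt} + \varepsilon\Delta u-u+\bar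 u\mathbf{1} = \beta - \bar\beta\mathbf{1}$, $\beta(t)\in\mathcal B(u(t))$. *)

theory Defs
  imports "HOL-Analysis.Analysis"
begin

definition wgraph :: "('v::finite \<Rightarrow> 'v \<Rightarrow> real) \<Rightarrow> bool" where
  "wgraph \<omega> \<longleftrightarrow> (\<forall>i j. \<omega> i j = \<omega> j i) \<and> (\<forall>i j. 0 \<le> \<omega> i j) \<and> (\<forall>i. \<omega> i i = 0)
     \<and> (\<forall>i j. (i, j) \<in> {(a, b). 0 < \<omega> a b}\<^sup>*)"

definition deg :: "('v::finite \<Rightarrow> 'v \<Rightarrow> real) \<Rightarrow> 'v \<Rightarrow> real" where
  "deg \<omega> i = (\<Sum>j\<in>UNIV. \<omega> i j)"

text \<open>\<open>d_i^r\<close>, with the convention \<open>x^0 = 1\<close>.\<close>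
definition degr :: "('v::finite \<Rightarrow> 'v \<Rightarrow> real) \<Rightarrow> real \<Rightarrow> 'v \<Rightarrow> real" where
  "degr \<omega> r i = (if r = 0 then 1 else deg \<omega> i powr r)"

definition innerV :: "('v::finite \<Rightarrow> 'v \<Rightarrow> real) \<Rightarrow> real \<Rightarrow> ('v \<Rightarrow> real) \<Rightarrow> ('v \<Rightarrow> real) \<Rightarrow> real" where
  "innerV \<omega> r u v = (\<Sum>i\<in>UNIV. u i * v i * degr \<omega> r i)"

definition normV :: "('v::finite \<Rightarrow> 'v \<Rightarrow> real) \<Rightarrow> real \<Rightarrow> ('v \<Rightarrow> real) \<Rightarrow> real" where
  "normV \<omega> r u = sqrt (innerV \<omega> r u u)"

definition innerE :: "('v::finite \<Rightarrow> 'v \<Rightarrow> real) \<Rightarrow> ('v \<Rightarrow> 'v \<Rightarrow> real) \<Rightarrow> ('v \<Rightarrow> 'v \<Rightarrow> real) \<Rightarrow> real" where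
  "innerE \<omega> \<phi> \<psi> = 1/2 * (\<Sum>i\<in>UNIV. \<Sum>j\<in>UNIV. \<phi> i j * \<psi> i j * \<omega> i j)"

definition normE :: "('v::finite \<Rightarrow> 'v \<Rightarrow> real) \<Rightarrow> ('v \<Rightarrow> 'v \<Rightarrow> real) \<Rightarrow> real" where
  "normE \<omega> \<phi> = sqrt (innerE \<omega> \<phi> \<phi>)"

definition grad :: "('v::finite \<Rightarrow> 'v \<Rightarrow> real) \<Rightarrow> ('v \<Rightarrow> real) \<Rightarrow> 'v \<Rightarrow> 'v \<Rightarrow> real" where
  "grad \<omega> u i j = (if 0 < \<omega> i j then u j - u i else 0)"

definition lap :: "('v::finite \<Rightarrow> 'v \<Rightarrow> real) \<Rightarrow> real \<Rightarrow> ('v \<Rightarrow> real) \<Rightarrow> 'v \<Rightarrow> real" where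
  "lap \<omega> r u i = (1 / degr \<omega> r i) * (\<Sum>j\<in>UNIV. \<omega> i j * (u i - u j))"

text \<open>Matrix exponential \<open>e^{-\<tau>\<Delta>}\<close> applied to a function, via its power series.\<close>
definition heat :: "('v::finite \<Rightarrow> 'v \<Rightarrow> real) \<Rightarrow> real \<Rightarrow> real \<Rightarrow> ('v \<Rightarrow> real) \<Rightarrow> 'v \<Rightarrow> real" where
  "heat \<omega> r \<tau> u i = (\<Sum>k. (- \<tau>) ^ k / fact k * ((lap \<omega> r ^^ k) u) i)"

definition mass :: "('v::finite \<Rightarrow> 'v \<Rightarrow> real) \<Rightarrow> real \<Rightarrow> ('v \<Rightarrow> real) \<Rightarrow> real" where
  "mass \<omega> r u = innerV \<omega> r u (\<lambda>_. 1)"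

definition avg :: "('v::finite \<Rightarrow> 'v \<Rightarrow> real) \<Rightarrow> real \<Rightarrow> ('v \<Rightarrow> real) \<Rightarrow> real" where
  "avg \<omega> r u = mass \<omega> r u / mass \<omega> r (\<lambda>_. 1)"

definition V01 :: "('v \<Rightarrow> real) set" where
  "V01 = {u. \<forall>i. 0 \<le> u i \<and> u i \<le> 1}"

definition Wdo :: "real \<Rightarrow> ereal" where
  "Wdo x = (if 0 \<le> x \<and> x \<le> 1 then ereal (x * (1 - x) / 2) else \<infinity>)"

definition GL :: "('v::finite \<Rightarrow> 'v \<Rightarrow> real) \<Rightarrow> real \<Rightarrow> real \<Rightarrow> ('v \<Rightarrow> real) \<Rightarrow> ereal" where
  "GL \<omega> r \<epsilon> u = ereal (1/2 * (normE \<omega> (grad \<omega> u))\<^sup>2)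
      + ereal (1/\<epsilon>) * (\<Sum>i\<in>UNIV. ereal (degr \<omega> r i) * Wdo (u i))"

definition Bset :: "('v \<Rightarrow> real) \<Rightarrow> ('v \<Rightarrow> real) set" where
  "Bset u = {\<beta>. \<forall>i. (u i = 0 \<longrightarrow> \<beta> i \<ge> 0) \<and> (0 < u i \<and> u i < 1 \<longrightarrow> \<beta> i = 0)
                   \<and> (u i = 1 \<longrightarrow> \<beta> i \<le> 0)}"

definition semidiscrete :: "('v::finite \<Rightarrow> 'v \<Rightarrow> real) \<Rightarrow> real \<Rightarrow> real \<Rightarrow> real \<Rightarrow> ('v \<Rightarrow> real)
    \<Rightarrow> (nat \<Rightarrow> 'v \<Rightarrow> real) \<Rightarrow> bool" where
  "semidiscrete \<omega> r \<epsilon> \<tau> u0 U \<longleftrightarrow> U 0 = u0 \<and>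
     (\<forall>m. U (Suc m) \<in> V01 \<and> (\<exists>\<beta>\<in>Bset (U (Suc m)). \<forall>i.
        U (Suc m) i - heat \<omega> r \<tau> (U m) i - (\<tau>/\<epsilon>) * U (Suc m) i + (\<tau>/\<epsilon>) * avg \<omega> r (U (Suc m))
        = (\<tau>/\<epsilon>) * \<beta> i - (\<tau>/\<epsilon>) * avg \<omega> r \<beta>))"

text \<open>\<open>H^1_loc([0,\<infinity>); \<V>)\<close>: each component is an indefinite integral of a locally
  square-integrable function on [0,\<infinity>).\<close>
definition H1loc :: "(real \<Rightarrow> 'v \<Rightarrow> real) \<Rightarrow> bool" where
  "H1loc u \<longleftrightarrow> (\<forall>i. \<exists>g. (\<forall>T\<ge>0. set_integrable lborel {0..T} g
        \<and> set_integrable lborel {0..T} (\<lambda>t. (g t)\<^sup>2))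
      \<and> (\<forall>t\<ge>0. u t i = u 0 i + (LINT s:{0..t}|lborel. g s)))"

definition ACsol :: "('v::finite \<Rightarrow> 'v \<Rightarrow> real) \<Rightarrow> real \<Rightarrow> real \<Rightarrow> (real \<Rightarrow> 'v \<Rightarrow> real)
    \<Rightarrow> (real \<Rightarrow> 'v \<Rightarrow> real) \<Rightarrow> bool" where
  "ACsol \<omega> r \<epsilon> u \<beta> \<longleftrightarrow> H1loc u \<and> (\<forall>i. continuous_on {0..} (\<lambda>t. u t i))
     \<and> (\<forall>t\<ge>0. u t \<in> V01)
     \<and> (AE t in lborel. 0 < t \<longrightarrow> (\<exists>u'. (\<forall>i. ((\<lambda>s. u s i) has_real_derivative u' i) (at t))
          \<and> \<beta> t \<in> Bset (u t)
          \<and> (\<forall>i. \<epsilon> * u' i + \<epsilon> * lap \<omega> r (u t) i - u t i + avg \<omega> r (u t)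
                 = \<beta> t i - avg \<omega> r (\<beta> t))))"

end

theory Submission
  imports Defs
begin
lemma NP_open:
  fixes f :: "real \<Rightarrow> real" and \<nu> :: "real measure"
  assumes sets: "sets \<nu> = sets borel" and fin: "emeasure \<nu> (space \<nu>) \<noteq> \<infinity>"
    and null: "\<And>A. A \<in> null_sets lborel \<Longrightarrow> emeasure \<nu> A = 0"
    and bnd: "\<And>x y. a < x \<Longrightarrow> x \<le> y \<Longrightarrow> y < b \<Longrightarrow> ennreal \<bar>f y - f x\<bar> \<le> emeasure \<nu> {x..y}"
    and N: "negligible N" "N \<subseteq> {a<..<b}"
  shows "negligible (f ` N)"
proof -
  have "N \<in> null_sets (completion lborel)" using N negligible_iff_null_sets by blast
  from null_sets_completion_iff2[THEN iffD1, OF this] obtain N' where N': "N' \<in> null_sets lborel" "N \<subseteq> N'"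
    by blast
  have \<nu>N': "emeasure \<nu> N' = 0" using null N' by blast
  have N'b: "N' \<in> sets borel" using N' by (auto simp: null_sets_def)
  have finC: "emeasure \<nu> C < \<infinity>" for C
  proof -
    have "emeasure \<nu> C \<le> emeasure \<nu> (space \<nu>)"
      by (metis emeasure_notin_sets emeasure_space zero_le)
    then show ?thesis using fin by (simp add: less_top order.strict_trans1)
  qed
  show ?thesis unfolding negligible_outer_le
  proof (intro allI impI)
    fix e :: real assume "e > 0"
    have "emeasure \<nu> N' = (INF U\<in>{U. N' \<subseteq> U \<and> open U}. emeasure \<nu> U)"
      by (rule outer_regular[OF sets fin N'b])
    then have "(INF U\<in>{U. N' \<subseteq> U \<and> open U}. emeasure \<nu> U) < ennreal (e/4)"
      using \<nu>N' \<open>e > 0\<close> by simp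
    then obtain U where U: "N' \<subseteq> U" "open U" "emeasure \<nu> U < ennreal (e/4)"
      by (auto simp: INF_less_iff)
    define Op where "Op = U \<inter> {a<..<b}"
    have oO: "open Op" unfolding Op_def using U by auto
    define cc where "cc q = connected_component_set Op q" for q
    define cen where "cen C = f (SOME x. x \<in> C)" for C
    define rad where "rad C = enn2real (emeasure \<nu> C)" for C
    define B where "B C = {cen C - rad C .. cen C + rad C}" for C
    define Q where "Q = \<rat> \<inter> Op"
    have ccO: "cc q \<in> sets \<nu>" for q
      using open_connected_component[OF oO] unfolding sets cc_def by auto
    have key: "f x \<in> B (cc q)" if "x \<in> cc q" for x q
    proof -
      define x0 where "x0 = (SOME x. x \<in> cc q)"
      have x0: "x0 \<in> cc q" unfolding x0_def using that by (rule someI)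
      have iv: "is_interval (cc q)" unfolding cc_def
        by (simp add: is_interval_connected_1)
      have sub: "cc q \<subseteq> {a<..<b}"
      proof -
        have "cc q \<subseteq> Op" unfolding cc_def by (rule connected_component_subset)
        then show ?thesis unfolding Op_def by blast
      qed
      have "\<bar>f x - f x0\<bar> \<le> rad (cc q)"
      proof -
        have "{min x x0..max x x0} \<subseteq> cc q"
        proof
          fix z assume z: "z \<in> {min x x0..max x x0}"
          have "min x x0 \<in> cc q" "max x x0 \<in> cc q" using x0 that by (auto simp: min_def max_def)
          then show "z \<in> cc q" using iv[unfolded is_interval_1, rule_format, of "min x x0" "max x x0" z] z by simp
        qed
        moreover have "ennreal \<bar>f (max x x0) - f (min x x0)\<bar> \<le> emeasure \<nu> {min x x0..max x x0}"
          using bnd sub x0 that by (intro bnd) auto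
        ultimately have "ennreal \<bar>f (max x x0) - f (min x x0)\<bar> \<le> emeasure \<nu> (cc q)"
          by (meson ccO emeasure_mono order_trans)
        then have "enn2real (ennreal \<bar>f (max x x0) - f (min x x0)\<bar>) \<le> rad (cc q)"
          unfolding rad_def using finC by (intro enn2real_mono) auto
        then show ?thesis by (cases "x \<le> x0") (auto simp: max_def min_def abs_minus_commute)
      qed
      then show ?thesis unfolding B_def cen_def x0_def[symmetric] by auto
    qed
    show "\<exists>T. f ` N \<subseteq> T \<and> T \<in> lmeasurable \<and> measure lebesgue T \<le> e"
    proof (intro exI conjI)
      show "f ` N \<subseteq> (\<Union>q\<in>Q. B (cc q))"
      proof
        fix y assume "y \<in> f ` N"
        then obtain x where x: "x \<in> N" "y = f x" by auto
        have xO: "x \<in> Op" using x N N' U unfolding Op_def by auto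
        have "open (cc x)" unfolding cc_def using open_connected_component[OF oO] .
        moreover have "x \<in> cc x" unfolding cc_def using xO by simp
        ultimately obtain d where "d > 0" "ball x d \<subseteq> cc x" using open_contains_ball by blast
        moreover obtain q where "q \<in> \<rat>" "x < q" "q < x + d" using Rats_dense_in_real[of x "x+d"] \<open>d>0\<close> by auto
        ultimately have qx: "q \<in> cc x" by (auto simp: dist_real_def)
        then have "cc q = cc x" unfolding cc_def by (rule connected_component_eq)
        moreover have "q \<in> Q" using qx \<open>q \<in> \<rat>\<close> connected_component_subset unfolding Q_def cc_def by blast
        ultimately have "f x \<in> B (cc q)" "q \<in> Q" using key[of x x] \<open>x \<in> cc x\<close> by simp_all
        then show "y \<in> (\<Union>q\<in>Q. B (cc q))" using x by blast
      qed
      have cQ: "countable Q" unfolding Q_def by (simp add: countable_rat)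
      have Bm: "B C \<in> fmeasurable lebesgue" for C unfolding B_def
        by (metis cbox_interval lmeasurable_cbox)
      have bound: "measure lebesgue (\<Union>q\<in>I. B (cc q)) \<le> e" if "I \<subseteq> Q" "finite I" for I
      proof -
        have "(\<Union>q\<in>I. B (cc q)) = \<Union>(B ` (cc ` I))" by auto
        also have "measure lebesgue \<dots> \<le> (\<Sum>C\<in>cc ` I. measure lebesgue (B C))"
          by (rule measure_UNION_le) (use that Bm in auto)
        also have "\<dots> = (\<Sum>C\<in>cc ` I. 2 * rad C)"
          by (intro sum.cong refl) (simp add: B_def rad_def measure_completion)
        also have "\<dots> = 2 * enn2real (\<Sum>C\<in>cc ` I. emeasure \<nu> C)"
          using enn2real_sum[of "cc ` I" "emeasure \<nu>"] finC by (simp add: sum_distrib_left rad_def o_def)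
        also have "(\<Sum>C\<in>cc ` I. emeasure \<nu> C) = emeasure \<nu> (\<Union>C\<in>cc ` I. C)"
        proof (rule sum_emeasure)
          show "(\<lambda>C. C) ` cc ` I \<subseteq> sets \<nu>" using ccO by auto
          show "disjoint_family_on (\<lambda>C. C) (cc ` I)"
            unfolding disjoint_family_on_def cc_def
            using connected_component_nonoverlap by blast
        qed (use that in auto)
        also have "enn2real (emeasure \<nu> (\<Union>C\<in>cc ` I. C)) \<le> enn2real (emeasure \<nu> U)"
        proof (rule enn2real_mono)
          show "emeasure \<nu> (\<Union>C\<in>cc ` I. C) \<le> emeasure \<nu> U"
            apply (rule emeasure_mono)
            using connected_component_subset unfolding cc_def Op_def apply blast
            using U sets by auto
        qed (use finC in auto)
        also have "enn2real (emeasure \<nu> U) \<le> e/4"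
          using enn2real_mono[of "emeasure \<nu> U" "ennreal (e/4)"] U \<open>e>0\<close> by simp
        finally show ?thesis using \<open>e > 0\<close> by simp
      qed
      show "(\<Union>q\<in>Q. B (cc q)) \<in> lmeasurable"
        by (rule fmeasurable_UN_bound[OF cQ Bm bound]) auto
      show "measure lebesgue (\<Union>q\<in>Q. B (cc q)) \<le> e"
        by (rule measure_UN_bound[OF cQ Bm bound]) auto
    qed
  qed
qed

lemma MONO0:
  fixes f :: "real \<Rightarrow> real"
  assumes ab: "a < b" and cont: "continuous_on {a..b} f" and negZ: "negligible (f ` Z)"
    and der: "\<And>x. x \<in> {a..b} - Z \<Longrightarrow> a < x \<and> x < b \<and> (\<exists>D. DERIV f x :> D \<and> D < 0)"
  shows "f b \<le> f a"
proof (rule ccontr)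
  assume "\<not> f b \<le> f a"
  then have lt: "f a < f b" by simp
  have "{f a<..<f b} \<subseteq> f ` Z"
  proof
    fix y assume y: "y \<in> {f a<..<f b}"
    define S where "S = {x\<in>{a..b}. f x = y}"
    obtain x1 where "a \<le> x1" "x1 \<le> b" "f x1 = y"
      using IVT'[of f a y b] y ab cont by auto
    then have Sne: "S \<noteq> {}" unfolding S_def by auto
    have Scl: "closed S" unfolding S_def
      by (rule continuous_closed_preimage_constant[OF cont]) simp
    have Sbdd: "bdd_above S" unfolding S_def by (rule bdd_aboveI[of _ b]) auto
    define x where "x = Sup S"
    have xS: "x \<in> S" unfolding x_def by (rule closed_contains_Sup[OF Sne Sbdd Scl])
    have "x \<in> Z"
    proof (rule ccontr)
      assume "x \<notin> Z"
      with xS have "a < x \<and> x < b \<and> (\<exists>D. DERIV f x :> D \<and> D < 0)" using der unfolding S_def by auto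
      then obtain D where x: "a < x" "x < b" and D: "DERIV f x :> D" "D < 0" by blast
      obtain d where d: "d > 0" "\<And>h. h > 0 \<Longrightarrow> h < d \<Longrightarrow> f x > f (x + h)"
        using DERIV_neg_dec_right[OF D] by blast
      have "0 < (b - x)/2" using x by simp
      then obtain h where h: "0 < h" "h < d" "h < (b - x)/2"
        using field_lbound_gt_zero[OF d(1)] by blast
      define z where "z = x + h"
      have z1: "x < z" unfolding z_def using h by linarith
      have z2: "z < b" unfolding z_def using h x by argo
      note z = z1 z2
      have fz: "f z < y" using d(2)[of h] h xS unfolding z_def S_def by auto
      obtain w where w: "z \<le> w" "w \<le> b" "f w = y"
        using IVT'[of f z y b] fz y z continuous_on_subset[OF cont, of "{z..b}"] x by auto
      then have "w \<in> S" using z x unfolding S_def by auto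
      then have "w \<le> x" unfolding x_def by (rule cSup_upper[OF _ Sbdd])
      then show False using w z by simp
    qed
    then show "y \<in> f ` Z" using xS unfolding S_def by auto
  qed
  then have "negligible {f a<..<f b}" using negZ negligible_subset by blast
  then show False using negligible_interval(2)[of "f a" "f b"] lt by (simp add: box_real)
qed

lemma MONO:
  fixes f k :: "real \<Rightarrow> real"
  assumes ab: "a < b" and cont: "continuous_on {a..b} f"
    and kint: "set_integrable lborel {a..b} k" and k0: "\<And>x. x \<in> {a..b} \<Longrightarrow> 0 \<le> k x"
    and bnd: "\<And>x y. a \<le> x \<Longrightarrow> x \<le> y \<Longrightarrow> y \<le> b \<Longrightarrow> \<bar>f y - f x\<bar> \<le> (LINT t:{x..y}|lborel. k t)"
    and ae: "AE x in lborel. a < x \<and> x < b \<longrightarrow> (\<exists>D. DERIV f x :> D \<and> D \<le> 0)"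
  shows "f b \<le> f a"
proof -
  from ae obtain N0 where N0: "{x \<in> space lborel. \<not> (a < x \<and> x < b \<longrightarrow> (\<exists>D. DERIV f x :> D \<and> D \<le> 0))} \<subseteq> N0"
    "emeasure lborel N0 = 0" "N0 \<in> sets lborel" by (rule AE_E)
  have N0n: "negligible N0"
    using N0 by (simp add: negligible_iff_null_sets null_sets_completionI null_setsI)
  have kmeas[measurable]: "(\<lambda>t. indicator {a..b} t * k t) \<in> borel_measurable lborel"
    using kint unfolding set_integrable_def by (simp add: borel_measurable_integrable)
  have main: "f b - f a \<le> \<eta> * (b - a)" if "\<eta> > 0" for \<eta>
  proof -
    define g where "g x = f x - \<eta> * x" for x
    define Z where "Z = N0 \<inter> {a<..<b}"
    define f1 where "f1 t = ennreal (indicator {a..b} t * k t)" for t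
    define f2 where "f2 t = ennreal (\<eta> * indicator {a..b} t)" for t
    have f1m[measurable]: "f1 \<in> borel_measurable lborel" unfolding f1_def by measurable
    have f2m[measurable]: "f2 \<in> borel_measurable lborel" unfolding f2_def by measurable
    define \<nu> where "\<nu> = density lborel (\<lambda>t. f1 t + f2 t)"
    have nu_split: "emeasure \<nu> X = emeasure (density lborel f1) X + emeasure (density lborel f2) X"
      if "X \<in> sets borel" for X
      unfolding \<nu>_def using emeasure_density_add[of X lborel f1 f2] that by simp
    have f1int: "emeasure (density lborel f1) {x..y} = ennreal (LINT t:{x..y}|lborel. k t)"
      if "a \<le> x" "y \<le> b" for x y
    proof -
      have si: "set_integrable lborel {x..y} k"
        by (rule set_integrable_subset[OF kint]) (use that in auto)
      have "emeasure (density lborel f1) {x..y} = (\<integral>\<^sup>+ t. f1 t * indicator {x..y} t \<partial>lborel)"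
        by (rule emeasure_density) auto
      also have "\<dots> = (\<integral>\<^sup>+ t. ennreal (indicator {x..y} t * k t) \<partial>lborel)"
        by (intro nn_integral_cong) (use that in \<open>auto simp: f1_def indicator_def\<close>)
      also have "\<dots> = ennreal (LINT t:{x..y}|lborel. k t)"
      proof -
        have i: "integrable lborel (\<lambda>t. indicator {x..y} t * k t)"
          using si by (simp add: set_integrable_def)
        have "(\<integral>\<^sup>+ t. ennreal (indicator {x..y} t * k t) \<partial>lborel) = ennreal (integral\<^sup>L lborel (\<lambda>t. indicator {x..y} t * k t))"
          by (rule nn_integral_eq_integral[OF i]) (use k0 that in \<open>auto simp: indicator_def\<close>)
        then show ?thesis by (simp add: set_lebesgue_integral_def)
      qed
      finally show ?thesis .
    qed
    have f2int: "emeasure (density lborel f2) {x..y} = ennreal (\<eta> * (y - x))"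
      if "a \<le> x" "y \<le> b" "x \<le> y" for x y
    proof -
      have "emeasure (density lborel f2) {x..y} = (\<integral>\<^sup>+ t. f2 t * indicator {x..y} t \<partial>lborel)"
        by (rule emeasure_density) auto
      also have "\<dots> = (\<integral>\<^sup>+ t. ennreal \<eta> * indicator {x..y} t \<partial>lborel)"
        by (intro nn_integral_cong) (use that in \<open>auto simp: f2_def indicator_def\<close>)
      also have "\<dots> = ennreal \<eta> * emeasure lborel {x..y}"
        by (rule nn_integral_cmult_indicator) simp
      also have "\<dots> = ennreal (\<eta> * (y - x))"
        using that \<open>\<eta> > 0\<close> by (simp add: ennreal_mult)
      finally show ?thesis .
    qed
    have negZ: "negligible (g ` Z)"
    proof (rule NP_open[of \<nu> a b g Z])
      show "sets \<nu> = sets borel" unfolding \<nu>_def by simp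
      have "emeasure \<nu> (space \<nu>) = emeasure \<nu> {a..b} + emeasure \<nu> (UNIV - {a..b})"
        unfolding \<nu>_def by (simp add: plus_emeasure)
      show "emeasure \<nu> (space \<nu>) \<noteq> \<infinity>"
      proof -
        have "emeasure \<nu> (space \<nu>) = emeasure \<nu> {a..b}"
        proof -
          have "emeasure \<nu> (space \<nu>) = (\<integral>\<^sup>+ t. (f1 t + f2 t) * indicator UNIV t \<partial>lborel)"
            unfolding \<nu>_def by (simp add: emeasure_density)
          also have "\<dots> = (\<integral>\<^sup>+ t. (f1 t + f2 t) * indicator {a..b} t \<partial>lborel)"
            by (intro nn_integral_cong) (auto simp: f1_def f2_def indicator_def)
          also have "\<dots> = emeasure \<nu> {a..b}"
            unfolding \<nu>_def by (simp add: emeasure_density)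
          finally show ?thesis .
        qed
        also have "\<dots> = ennreal (LINT t:{a..b}|lborel. k t) + ennreal (\<eta> * (b - a))"
          using nu_split[of "{a..b}"] f1int[of a b] f2int[of a b] ab by simp
        finally show ?thesis by simp
      qed
      show "emeasure \<nu> A = 0" if "A \<in> null_sets lborel" for A
        using absolutely_continuousD[OF absolutely_continuousI_density[of "\<lambda>t. f1 t + f2 t" lborel], of A] that
        unfolding \<nu>_def by (auto simp: null_sets_def)
      show "ennreal \<bar>g y - g x\<bar> \<le> emeasure \<nu> {x..y}" if "a < x" "x \<le> y" "y < b" for x y
      proof -
        have "\<bar>g y - g x\<bar> \<le> (LINT t:{x..y}|lborel. k t) + \<eta> * (y - x)"
          using bnd[of x y] that \<open>\<eta> > 0\<close> unfolding g_def
          by (simp add: abs_le_iff algebra_simps) (smt (verit) mult_left_mono)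
        then have "ennreal \<bar>g y - g x\<bar> \<le> ennreal ((LINT t:{x..y}|lborel. k t) + \<eta> * (y - x))"
          by (rule ennreal_leI)
        also have "\<dots> = ennreal (LINT t:{x..y}|lborel. k t) + ennreal (\<eta> * (y - x))"
        proof (rule ennreal_plus)
          show "0 \<le> (LINT t:{x..y}|lborel. k t)"
            unfolding set_lebesgue_integral_def
            using k0 that by (intro integral_nonneg_AE) (auto simp: indicator_def)
          show "0 \<le> \<eta> * (y - x)" using that \<open>\<eta> > 0\<close> by simp
        qed
        also have "\<dots> = emeasure \<nu> {x..y}"
          using nu_split[of "{x..y}"] f1int[of x y] f2int[of x y] that by simp
        finally show ?thesis .
      qed
      show "negligible Z" using N0n unfolding Z_def by (rule negligible_subset) auto
      show "Z \<subseteq> {a<..<b}" unfolding Z_def by auto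
    qed
    have negZ': "negligible (g ` (Z \<union> {a, b}))"
      using negZ by (simp add: image_Un)
    have "g b \<le> g a"
    proof (rule MONO0[OF ab _ negZ'])
      show "continuous_on {a..b} g" unfolding g_def by (intro continuous_intros cont)
      show "a < x \<and> x < b \<and> (\<exists>D. DERIV g x :> D \<and> D < 0)" if "x \<in> {a..b} - (Z \<union> {a, b})" for x
      proof -
        have x: "a < x" "x < b" "x \<notin> N0" using that unfolding Z_def by auto
        then obtain D where D: "DERIV f x :> D" "D \<le> 0" using N0(1) by auto
        have "DERIV g x :> D - \<eta>" unfolding g_def
          using D(1) by (auto intro!: derivative_eq_intros)
        then show ?thesis using x D(2) \<open>\<eta> > 0\<close> by (intro conjI exI[of _ "D - \<eta>"]) auto
      qed
    qed
    then show ?thesis unfolding g_def by (simp add: algebra_simps)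
  qed
  show ?thesis
  proof (rule ccontr)
    assume "\<not> f b \<le> f a"
    then have pos: "0 < (f b - f a) / (2 * (b - a))" using ab by simp
    have "f b - f a \<le> (f b - f a) / (2 * (b - a)) * (b - a)" by (rule main[OF pos])
    also have "\<dots> = (f b - f a) / 2" using ab by (simp add: field_simps)
    finally show False using \<open>\<not> f b \<le> f a\<close> by simp
  qed
qed

definition Qf :: "('v::finite \<Rightarrow> 'v \<Rightarrow> real) \<Rightarrow> real \<Rightarrow> real \<Rightarrow> ('v \<Rightarrow> real) \<Rightarrow> real" where
  "Qf \<omega> r \<epsilon> p = 1/4 * (\<Sum>i\<in>UNIV. \<Sum>j\<in>UNIV. \<omega> i j * (p j - p i)^2)
     + 1/\<epsilon> * (\<Sum>i\<in>UNIV. degr \<omega> r i * (p i * (1 - p i) / 2))"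

lemma w_nonneg: "wgraph \<omega> \<Longrightarrow> 0 \<le> \<omega> i j"
  unfolding wgraph_def by blast

lemma w_sym: "wgraph \<omega> \<Longrightarrow> \<omega> i j = \<omega> j i"
  unfolding wgraph_def by blast

lemma deg_nonneg: "wgraph \<omega> \<Longrightarrow> 0 \<le> deg \<omega> i"
  unfolding deg_def by (intro sum_nonneg) (simp add: w_nonneg)

lemma degr_nonneg: "wgraph \<omega> \<Longrightarrow> 0 \<le> degr \<omega> r i"
  unfolding degr_def by simp

lemma lap_mul:
  assumes "wgraph \<omega>"
  shows "degr \<omega> r i * lap \<omega> r p i = (\<Sum>j\<in>UNIV. \<omega> i j * (p i - p j))"
proof (cases "degr \<omega> r i = 0")
  case True
  then have "r \<noteq> 0" "deg \<omega> i = 0" unfolding degr_def by (auto split: if_splits)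
  then have "\<forall>j\<in>UNIV. \<omega> i j = 0"
    using sum_nonneg_eq_0_iff[of UNIV "\<omega> i"] w_nonneg[OF assms] unfolding deg_def by auto
  then show ?thesis using True by simp
next
  case False
  then show ?thesis unfolding lap_def by simp
qed

lemma sum_lap_zero:
  assumes "wgraph \<omega>"
  shows "(\<Sum>i\<in>UNIV. \<Sum>j\<in>UNIV. \<omega> i j * (p i - p j)) = (0::real)"
proof -
  have "(\<Sum>i\<in>UNIV. \<Sum>j\<in>UNIV. \<omega> i j * (p i - p j)) = (\<Sum>j\<in>UNIV. \<Sum>i\<in>UNIV. \<omega> i j * (p i - p j))"
    by (rule sum.swap)
  also have "\<dots> = (\<Sum>j\<in>UNIV. \<Sum>i\<in>UNIV. - (\<omega> j i * (p j - p i)))"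
  proof (intro sum.cong refl)
    fix i j show "\<omega> i j * (p i - p j) = - (\<omega> j i * (p j - p i))"
      using w_sym[OF assms, of j i] by (simp add: algebra_simps)
  qed
  also have "\<dots> = - (\<Sum>i\<in>UNIV. \<Sum>j\<in>UNIV. \<omega> i j * (p i - p j))"
    by (simp add: sum_negf)
  finally show ?thesis by simp
qed

lemma sum_avg_zero:
  assumes "wgraph \<omega>"
  shows "(\<Sum>i\<in>UNIV. degr \<omega> r i * (q i - avg \<omega> r q)) = 0"
proof -
  have m1: "mass \<omega> r (\<lambda>_. 1) = (\<Sum>i\<in>UNIV. degr \<omega> r i)" unfolding mass_def innerV_def by simp
  have mq: "mass \<omega> r q = (\<Sum>i\<in>UNIV. degr \<omega> r i * q i)" unfolding mass_def innerV_def
    by (simp add: mult.commute)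
  show ?thesis
  proof (cases "(\<Sum>i\<in>UNIV. degr \<omega> r i) = 0")
    case True
    then have "\<forall>i\<in>UNIV. degr \<omega> r i = 0"
      using sum_nonneg_eq_0_iff[of UNIV "degr \<omega> r"] degr_nonneg[OF assms] by auto
    then show ?thesis by simp
  next
    case False
    have "(\<Sum>i\<in>UNIV. degr \<omega> r i * (q i - avg \<omega> r q))
        = (\<Sum>i\<in>UNIV. degr \<omega> r i * q i) - avg \<omega> r q * (\<Sum>i\<in>UNIV. degr \<omega> r i)"
      by (simp add: algebra_simps sum_subtractf sum_distrib_left)
    also have "\<dots> = 0" using False unfolding avg_def m1 mq by simp
    finally show ?thesis .
  qed
qed

lemma grad_identity:
  assumes "wgraph \<omega>"
  shows "1/2 * (\<Sum>i\<in>UNIV. \<Sum>j\<in>UNIV. \<omega> i j * (p j - p i) * (h j - h i))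
       = (\<Sum>i\<in>UNIV. h i * (\<Sum>j\<in>UNIV. \<omega> i j * (p i - p j)))"
proof -
  have s1: "(\<Sum>i\<in>UNIV. \<Sum>j\<in>UNIV. \<omega> i j * (p j - p i) * h j)
          = (\<Sum>i\<in>UNIV. \<Sum>j\<in>UNIV. \<omega> i j * (p i - p j) * h i)"
  proof -
    have "(\<Sum>i\<in>UNIV. \<Sum>j\<in>UNIV. \<omega> i j * (p j - p i) * h j) = (\<Sum>j\<in>UNIV. \<Sum>i\<in>UNIV. \<omega> i j * (p j - p i) * h j)"
      by (rule sum.swap)
    also have "\<dots> = (\<Sum>j\<in>UNIV. \<Sum>i\<in>UNIV. \<omega> j i * (p j - p i) * h j)"
    proof (intro sum.cong refl)
      fix i j show "\<omega> i j * (p j - p i) * h j = \<omega> j i * (p j - p i) * h j"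
        using w_sym[OF assms, of j i] by simp
    qed
    finally show ?thesis .
  qed
  have "(\<Sum>i\<in>UNIV. \<Sum>j\<in>UNIV. \<omega> i j * (p j - p i) * (h j - h i))
      = (\<Sum>i\<in>UNIV. \<Sum>j\<in>UNIV. \<omega> i j * (p j - p i) * h j) + (\<Sum>i\<in>UNIV. \<Sum>j\<in>UNIV. \<omega> i j * (p i - p j) * h i)"
    by (simp add: sum.distrib[symmetric] algebra_simps)
  also have "\<dots> = 2 * (\<Sum>i\<in>UNIV. \<Sum>j\<in>UNIV. \<omega> i j * (p i - p j) * h i)" using s1 by simp
  finally have "(\<Sum>i\<in>UNIV. \<Sum>j\<in>UNIV. \<omega> i j * (p j - p i) * (h j - h i)) = 2 * (\<Sum>i\<in>UNIV. \<Sum>j\<in>UNIV. \<omega> i j * (p i - p j) * h i)" .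
  then show ?thesis by (simp add: sum_distrib_left algebra_simps)
qed

lemma key_identity:
  assumes wg: "wgraph \<omega>" and eps: "0 < \<epsilon>"
    and eq: "\<And>i. \<epsilon> * h i + \<epsilon> * lap \<omega> r p i - p i + avg \<omega> r p = \<beta> i - avg \<omega> r \<beta>"
    and hb: "\<And>i. h i * \<beta> i = 0"
  shows "1/2 * (\<Sum>i\<in>UNIV. \<Sum>j\<in>UNIV. \<omega> i j * (p j - p i) * (h j - h i))
       + 1/\<epsilon> * (\<Sum>i\<in>UNIV. degr \<omega> r i * (h i * (1 - 2 * p i) / 2))
       = - (\<Sum>i\<in>UNIV. degr \<omega> r i * (h i)^2)"
proof -
  define d where "d i = degr \<omega> r i" for i
  define c where "c i = (\<Sum>j\<in>UNIV. \<omega> i j * (p i - p j))" for i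
  define K where "K = (1/2 - avg \<omega> r p - avg \<omega> r \<beta>) / \<epsilon>"
  have dc: "d i * lap \<omega> r p i = c i" for i unfolding d_def c_def by (rule lap_mul[OF wg])
  have eqd: "\<epsilon> * (d i * h i) + \<epsilon> * c i - d i * (p i - avg \<omega> r p) = d i * (\<beta> i - avg \<omega> r \<beta>)" for i
  proof -
    have "d i * (\<epsilon> * h i + \<epsilon> * lap \<omega> r p i - p i + avg \<omega> r p) = d i * (\<beta> i - avg \<omega> r \<beta>)"
      using eq[of i] by simp
    then show ?thesis using dc[of i] by (simp add: algebra_simps)
  qed
  have A0: "(\<Sum>i\<in>UNIV. d i * h i) = 0"
  proof -
    have "(\<Sum>i\<in>UNIV. \<epsilon> * (d i * h i) + \<epsilon> * c i - d i * (p i - avg \<omega> r p)) = (\<Sum>i\<in>UNIV. d i * (\<beta> i - avg \<omega> r \<beta>))"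
      using eqd by simp
    then have "\<epsilon> * (\<Sum>i\<in>UNIV. d i * h i) + \<epsilon> * (\<Sum>i\<in>UNIV. c i) - (\<Sum>i\<in>UNIV. d i * (p i - avg \<omega> r p)) = (\<Sum>i\<in>UNIV. d i * (\<beta> i - avg \<omega> r \<beta>))"
      by (simp add: sum.distrib sum_subtractf sum_distrib_left)
    moreover have "(\<Sum>i\<in>UNIV. c i) = 0" unfolding c_def by (rule sum_lap_zero[OF wg])
    moreover have "(\<Sum>i\<in>UNIV. d i * (p i - avg \<omega> r p)) = 0" unfolding d_def by (rule sum_avg_zero[OF wg])
    moreover have "(\<Sum>i\<in>UNIV. d i * (\<beta> i - avg \<omega> r \<beta>)) = 0" unfolding d_def by (rule sum_avg_zero[OF wg])
    ultimately show ?thesis using eps by simp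
  qed
  have per: "h i * c i + 1/\<epsilon> * (d i * (h i * (1 - 2 * p i) / 2)) = - (d i * (h i)^2) + K * (d i * h i)" for i
  proof -
    have "h i * (\<epsilon> * (d i * h i) + \<epsilon> * c i - d i * (p i - avg \<omega> r p)) = h i * (d i * (\<beta> i - avg \<omega> r \<beta>))"
      using eqd[of i] by simp
    also have "\<dots> = d i * (h i * \<beta> i) - d i * avg \<omega> r \<beta> * h i" by (simp add: algebra_simps)
    also have "\<dots> = - d i * avg \<omega> r \<beta> * h i" using hb[of i] by simp
    finally have e1: "\<epsilon> * (d i * (h i)^2) + \<epsilon> * (h i * c i) - h i * d i * (p i - avg \<omega> r p) = - d i * avg \<omega> r \<beta> * h i"
      by (simp add: algebra_simps power2_eq_square)
    have "h i * c i = (- d i * avg \<omega> r \<beta> * h i + h i * d i * (p i - avg \<omega> r p)) / \<epsilon> - d i * (h i)^2"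
      using e1 eps by (simp add: field_simps)
    then show ?thesis unfolding K_def using eps by (simp add: field_simps)
  qed
  have "1/2 * (\<Sum>i\<in>UNIV. \<Sum>j\<in>UNIV. \<omega> i j * (p j - p i) * (h j - h i)) = (\<Sum>i\<in>UNIV. h i * c i)"
    unfolding c_def by (rule grad_identity[OF wg])
  then have "1/2 * (\<Sum>i\<in>UNIV. \<Sum>j\<in>UNIV. \<omega> i j * (p j - p i) * (h j - h i))
       + 1/\<epsilon> * (\<Sum>i\<in>UNIV. degr \<omega> r i * (h i * (1 - 2 * p i) / 2))
       = (\<Sum>i\<in>UNIV. h i * c i + 1/\<epsilon> * (d i * (h i * (1 - 2 * p i) / 2)))"
    unfolding d_def by (simp add: sum.distrib sum_distrib_left)
  also have "\<dots> = (\<Sum>i\<in>UNIV. - (d i * (h i)^2) + K * (d i * h i))" using per by simp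
  also have "\<dots> = - (\<Sum>i\<in>UNIV. d i * (h i)^2) + K * (\<Sum>i\<in>UNIV. d i * h i)"
    by (simp add: sum.distrib sum_distrib_left sum_negf sum_subtractf)
  finally show ?thesis using A0 unfolding d_def by simp
qed

lemma GL_Qf:
  assumes wg: "wgraph \<omega>" and p: "p \<in> V01"
  shows "GL \<omega> r \<epsilon> p = ereal (Qf \<omega> r \<epsilon> p)"
proof -
  have gw: "grad \<omega> p i j * grad \<omega> p i j * \<omega> i j = \<omega> i j * (p j - p i)^2" for i j
  proof (cases "0 < \<omega> i j")
    case True then show ?thesis by (simp add: grad_def power2_eq_square)
  next
    case False then have "\<omega> i j = 0" using w_nonneg[OF wg, of i j] by simp
    then show ?thesis by (simp add: grad_def)
  qed
  have ie: "innerE \<omega> (grad \<omega> p) (grad \<omega> p) = 1/2 * (\<Sum>i\<in>UNIV. \<Sum>j\<in>UNIV. \<omega> i j * (p j - p i)^2)"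
    unfolding innerE_def by (intro arg_cong[where f="\<lambda>x. 1/2 * x"] sum.cong refl gw)
  have ie0: "0 \<le> innerE \<omega> (grad \<omega> p) (grad \<omega> p)"
    unfolding ie by (intro mult_nonneg_nonneg sum_nonneg) (auto simp: w_nonneg[OF wg])
  have nE: "(normE \<omega> (grad \<omega> p))^2 = 1/2 * (\<Sum>i\<in>UNIV. \<Sum>j\<in>UNIV. \<omega> i j * (p j - p i)^2)"
    unfolding normE_def using ie0 ie by simp
  have W: "Wdo (p i) = ereal (p i * (1 - p i) / 2)" for i
    using p unfolding V01_def Wdo_def by auto
  have "(\<Sum>i\<in>UNIV. ereal (degr \<omega> r i) * Wdo (p i)) = (\<Sum>i\<in>UNIV. ereal (degr \<omega> r i * (p i * (1 - p i) / 2)))"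
    using W by simp
  also have "\<dots> = ereal (\<Sum>i\<in>UNIV. degr \<omega> r i * (p i * (1 - p i) / 2))"
    by (rule sum_ereal)
  finally have S: "(\<Sum>i\<in>UNIV. ereal (degr \<omega> r i) * Wdo (p i)) = ereal (\<Sum>i\<in>UNIV. degr \<omega> r i * (p i * (1 - p i) / 2))" .
  show ?thesis unfolding GL_def S nE Qf_def by simp
qed

lemma normV_sq:
  assumes wg: "wgraph \<omega>"
  shows "(normV \<omega> r w)^2 = (\<Sum>i\<in>UNIV. degr \<omega> r i * (w i)^2)"
proof -
  have "innerV \<omega> r w w = (\<Sum>i\<in>UNIV. degr \<omega> r i * (w i)^2)"
    unfolding innerV_def by (simp add: power2_eq_square algebra_simps)
  moreover have "0 \<le> (\<Sum>i\<in>UNIV. degr \<omega> r i * (w i)^2)"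
    by (intro sum_nonneg mult_nonneg_nonneg) (auto simp: degr_nonneg[OF wg])
  ultimately show ?thesis unfolding normV_def by simp
qed

lemma sq_diff_bound:
  fixes a b c e :: real
  assumes "0 \<le> a" "a \<le> 1" "0 \<le> b" "b \<le> 1" "0 \<le> c" "c \<le> 1" "0 \<le> e" "e \<le> 1"
  shows "\<bar>(a - b)^2 - (c - e)^2\<bar> \<le> 2 * (\<bar>a - c\<bar> + \<bar>b - e\<bar>)"
proof -
  have "(a - b)^2 - (c - e)^2 = ((a - b) - (c - e)) * ((a - b) + (c - e))"
    by (simp add: power2_eq_square algebra_simps)
  also have "\<dots> = ((a - c) - (b - e)) * ((a - b) + (c - e))" by simp
  finally have "\<bar>(a - b)^2 - (c - e)^2\<bar> = \<bar>(a - c) - (b - e)\<bar> * \<bar>(a - b) + (c - e)\<bar>"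
    by (simp add: abs_mult)
  also have "\<dots> \<le> (\<bar>a - c\<bar> + \<bar>b - e\<bar>) * 2"
  proof (rule mult_mono)
    show "\<bar>(a - c) - (b - e)\<bar> \<le> \<bar>a - c\<bar> + \<bar>b - e\<bar>" by (rule abs_triangle_ineq4)
    show "\<bar>(a - b) + (c - e)\<bar> \<le> 2" using assms by (auto simp: abs_le_iff)
  qed auto
  finally show ?thesis by simp
qed

lemma Qf_lip:
  assumes wg: "wgraph \<omega>" and eps: "0 < \<epsilon>" and p: "p \<in> V01" and q: "q \<in> V01"
  shows "\<bar>Qf \<omega> r \<epsilon> p - Qf \<omega> r \<epsilon> q\<bar> \<le> (\<Sum>i\<in>UNIV. (deg \<omega> i + degr \<omega> r i / (2 * \<epsilon>)) * \<bar>p i - q i\<bar>)"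
proof -
  have p01: "0 \<le> p i" "p i \<le> 1" for i using p unfolding V01_def by auto
  have q01: "0 \<le> q i" "q i \<le> 1" for i using q unfolding V01_def by auto
  define E1 where "E1 = (\<Sum>i\<in>UNIV. \<Sum>j\<in>UNIV. \<omega> i j * (p j - p i)^2) - (\<Sum>i\<in>UNIV. \<Sum>j\<in>UNIV. \<omega> i j * (q j - q i)^2)"
  define W1 where "W1 = (\<Sum>i\<in>UNIV. degr \<omega> r i * (p i * (1 - p i) / 2)) - (\<Sum>i\<in>UNIV. degr \<omega> r i * (q i * (1 - q i) / 2))"
  have "Qf \<omega> r \<epsilon> p - Qf \<omega> r \<epsilon> q = 1/4 * E1 + 1/\<epsilon> * W1"
    unfolding Qf_def E1_def W1_def by (simp add: algebra_simps)
  then have "\<bar>Qf \<omega> r \<epsilon> p - Qf \<omega> r \<epsilon> q\<bar> \<le> 1/4 * \<bar>E1\<bar> + 1/\<epsilon> * \<bar>W1\<bar>"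
    using eps by (simp add: abs_mult abs_triangle_ineq order_trans[OF abs_triangle_ineq])
  moreover have "\<bar>E1\<bar> \<le> 4 * (\<Sum>i\<in>UNIV. deg \<omega> i * \<bar>p i - q i\<bar>)"
  proof -
    have "E1 = (\<Sum>i\<in>UNIV. \<Sum>j\<in>UNIV. \<omega> i j * ((p j - p i)^2 - (q j - q i)^2))"
      unfolding E1_def by (simp add: sum_subtractf algebra_simps)
    then have "\<bar>E1\<bar> \<le> (\<Sum>i\<in>UNIV. \<bar>\<Sum>j\<in>UNIV. \<omega> i j * ((p j - p i)^2 - (q j - q i)^2)\<bar>)"
      by (simp only: sum_abs)
    also have "\<dots> \<le> (\<Sum>i\<in>UNIV. \<Sum>j\<in>UNIV. \<bar>\<omega> i j * ((p j - p i)^2 - (q j - q i)^2)\<bar>)"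
      by (intro sum_mono sum_abs)
    also have "\<dots> \<le> (\<Sum>i\<in>UNIV. \<Sum>j\<in>UNIV. \<omega> i j * (2 * (\<bar>p j - q j\<bar> + \<bar>p i - q i\<bar>)))"
    proof (intro sum_mono)
      fix i j
      show "\<bar>\<omega> i j * ((p j - p i)^2 - (q j - q i)^2)\<bar> \<le> \<omega> i j * (2 * (\<bar>p j - q j\<bar> + \<bar>p i - q i\<bar>))"
        using sq_diff_bound[of "p j" "p i" "q j" "q i"] p01 q01 w_nonneg[OF wg, of i j]
        by (simp add: abs_mult mult_left_mono)
    qed
    also have "\<dots> = 2 * (\<Sum>i\<in>UNIV. \<Sum>j\<in>UNIV. \<omega> i j * \<bar>p j - q j\<bar>) + 2 * (\<Sum>i\<in>UNIV. \<Sum>j\<in>UNIV. \<omega> i j * \<bar>p i - q i\<bar>)"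
      by (simp add: sum.distrib sum_distrib_left algebra_simps)
    also have "(\<Sum>i\<in>UNIV. \<Sum>j\<in>UNIV. \<omega> i j * \<bar>p j - q j\<bar>) = (\<Sum>i\<in>UNIV. \<Sum>j\<in>UNIV. \<omega> i j * \<bar>p i - q i\<bar>)"
    proof -
      have "(\<Sum>i\<in>UNIV. \<Sum>j\<in>UNIV. \<omega> i j * \<bar>p j - q j\<bar>) = (\<Sum>j\<in>UNIV. \<Sum>i\<in>UNIV. \<omega> i j * \<bar>p j - q j\<bar>)"
        by (rule sum.swap)
      also have "\<dots> = (\<Sum>j\<in>UNIV. \<Sum>i\<in>UNIV. \<omega> j i * \<bar>p j - q j\<bar>)"
      proof (intro sum.cong refl)
        fix i j show "\<omega> i j * \<bar>p j - q j\<bar> = \<omega> j i * \<bar>p j - q j\<bar>"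
          using w_sym[OF wg, of j i] by simp
      qed
      finally show ?thesis .
    qed
    also have "(\<Sum>i\<in>UNIV. \<Sum>j\<in>UNIV. \<omega> i j * \<bar>p i - q i\<bar>) = (\<Sum>i\<in>UNIV. deg \<omega> i * \<bar>p i - q i\<bar>)"
      unfolding deg_def by (simp add: sum_distrib_right)
    finally show ?thesis by simp
  qed
  moreover have "\<bar>W1\<bar> \<le> (\<Sum>i\<in>UNIV. degr \<omega> r i / 2 * \<bar>p i - q i\<bar>)"
  proof -
    have "W1 = (\<Sum>i\<in>UNIV. degr \<omega> r i * ((p i * (1 - p i) - q i * (1 - q i)) / 2))"
      unfolding W1_def sum_subtractf[symmetric] by (intro sum.cong refl) (simp add: field_simps)
    then have "\<bar>W1\<bar> \<le> (\<Sum>i\<in>UNIV. \<bar>degr \<omega> r i * ((p i * (1 - p i) - q i * (1 - q i)) / 2)\<bar>)"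
      by (simp only: sum_abs)
    also have "\<dots> \<le> (\<Sum>i\<in>UNIV. degr \<omega> r i / 2 * \<bar>p i - q i\<bar>)"
    proof (intro sum_mono)
      fix i
      have "p i * (1 - p i) - q i * (1 - q i) = (p i - q i) * (1 - p i - q i)"
        by (simp add: algebra_simps)
      moreover have "\<bar>1 - p i - q i\<bar> \<le> 1" using p01[of i] q01[of i] by simp
      ultimately have "\<bar>p i * (1 - p i) - q i * (1 - q i)\<bar> \<le> \<bar>p i - q i\<bar>"
        by (simp add: abs_mult mult_left_le)
      then show "\<bar>degr \<omega> r i * ((p i * (1 - p i) - q i * (1 - q i)) / 2)\<bar> \<le> degr \<omega> r i / 2 * \<bar>p i - q i\<bar>"
        using degr_nonneg[OF wg, of r i] by (simp add: abs_mult mult_left_mono)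
    qed
    finally show ?thesis .
  qed
  ultimately have "\<bar>Qf \<omega> r \<epsilon> p - Qf \<omega> r \<epsilon> q\<bar> \<le> (\<Sum>i\<in>UNIV. deg \<omega> i * \<bar>p i - q i\<bar>) + 1/\<epsilon> * (\<Sum>i\<in>UNIV. degr \<omega> r i / 2 * \<bar>p i - q i\<bar>)"
  proof -
    assume a1: "\<bar>Qf \<omega> r \<epsilon> p - Qf \<omega> r \<epsilon> q\<bar> \<le> 1/4 * \<bar>E1\<bar> + 1/\<epsilon> * \<bar>W1\<bar>"
      and a2: "\<bar>E1\<bar> \<le> 4 * (\<Sum>i\<in>UNIV. deg \<omega> i * \<bar>p i - q i\<bar>)"
      and a3: "\<bar>W1\<bar> \<le> (\<Sum>i\<in>UNIV. degr \<omega> r i / 2 * \<bar>p i - q i\<bar>)"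
    have "1/\<epsilon> * \<bar>W1\<bar> \<le> 1/\<epsilon> * (\<Sum>i\<in>UNIV. degr \<omega> r i / 2 * \<bar>p i - q i\<bar>)"
      using a3 eps by (intro mult_left_mono) auto
    then show ?thesis using a1 a2 by linarith
  qed
  also have "\<dots> = (\<Sum>i\<in>UNIV. (deg \<omega> i + degr \<omega> r i / (2 * \<epsilon>)) * \<bar>p i - q i\<bar>)"
    by (simp add: sum.distrib sum_distrib_left algebra_simps)
  finally show ?thesis .
qed

lemma Qf_deriv:
  assumes der: "\<And>i. DERIV (\<lambda>y. U y i) x :> h i"
  shows "DERIV (\<lambda>y. Qf \<omega> r \<epsilon> (U y)) x :>
     (1/2 * (\<Sum>i\<in>UNIV. \<Sum>j\<in>UNIV. \<omega> i j * (U x j - U x i) * (h j - h i))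
       + 1/\<epsilon> * (\<Sum>i\<in>UNIV. degr \<omega> r i * (h i * (1 - 2 * U x i) / 2)))"
proof -
  have d1: "DERIV (\<lambda>y. \<omega> i j * (U y j - U y i)^2) x :> \<omega> i j * (2 * (U x j - U x i) * (h j - h i))" for i j
    by (auto intro!: derivative_eq_intros der)
  have d2: "DERIV (\<lambda>y. degr \<omega> r i * (U y i * (1 - U y i) / 2)) x :> degr \<omega> r i * (h i * (1 - 2 * U x i) / 2)" for i
    by (auto intro!: derivative_eq_intros der simp: field_simps)
  have "DERIV (\<lambda>y. Qf \<omega> r \<epsilon> (U y)) x :>
     (1/4 * (\<Sum>i\<in>UNIV. \<Sum>j\<in>UNIV. \<omega> i j * (2 * (U x j - U x i) * (h j - h i)))
       + 1/\<epsilon> * (\<Sum>i\<in>UNIV. degr \<omega> r i * (h i * (1 - 2 * U x i) / 2)))"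
    unfolding Qf_def
    by (intro DERIV_add DERIV_cmult DERIV_sum d1 d2)
  moreover have "1/4 * (\<Sum>i\<in>UNIV. \<Sum>j\<in>UNIV. \<omega> i j * (2 * (U x j - U x i) * (h j - h i)))
     = 1/2 * (\<Sum>i\<in>UNIV. \<Sum>j\<in>UNIV. \<omega> i j * (U x j - U x i) * (h j - h i))"
    by (simp add: sum_distrib_left algebra_simps)
  ultimately show ?thesis by simp
qed

lemma si_sum:
  fixes f :: "'i \<Rightarrow> 'a \<Rightarrow> real"
  assumes "finite I" "\<And>i. i \<in> I \<Longrightarrow> set_integrable M A (f i)"
  shows "set_integrable M A (\<lambda>x. \<Sum>i\<in>I. f i x)"
    and "(LINT x:A|M. (\<Sum>i\<in>I. f i x)) = (\<Sum>i\<in>I. LINT x:A|M. f i x)"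
proof -
  have i: "integrable M (\<lambda>x. indicator A x * f i x)" if "i \<in> I" for i
    using assms(2)[OF that] unfolding set_integrable_def by simp
  have eq: "(\<lambda>x. indicator A x * (\<Sum>i\<in>I. f i x)) = (\<lambda>x. \<Sum>i\<in>I. indicator A x * f i x)"
    by (simp add: sum_distrib_left)
  show "set_integrable M A (\<lambda>x. \<Sum>i\<in>I. f i x)"
    unfolding set_integrable_def using i by (simp add: eq)
  show "(LINT x:A|M. (\<Sum>i\<in>I. f i x)) = (\<Sum>i\<in>I. LINT x:A|M. f i x)"
    unfolding set_lebesgue_integral_def using i by (simp add: eq integral_sum)
qed

lemma inc_rep:
  fixes g :: "real \<Rightarrow> real" and U :: "real \<Rightarrow> real"
  assumes gi: "\<And>T. T \<ge> 0 \<Longrightarrow> set_integrable lborel {0..T} g"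
    and rep: "\<And>t. t \<ge> 0 \<Longrightarrow> U t = U 0 + (LINT s:{0..t}|lborel. g s)"
    and xy: "0 \<le> x" "x \<le> y"
  shows "U y - U x = (LINT s:{x..y}|lborel. g s)"
proof -
  have "(LINT s:{0..x} \<union> {x..y}|lborel. g s) = (LINT s:{0..x}|lborel. g s) + (LINT s:{x..y}|lborel. g s)"
  proof (rule set_integral_Un_AE)
    show "AE t in lborel. \<not> (t \<in> {0..x} \<and> t \<in> {x..y})"
      using AE_lborel_singleton[of x] by eventually_elim auto
    show "set_integrable lborel {0..x} g" using gi xy by simp
    show "set_integrable lborel {x..y} g"
      by (rule set_integrable_subset[OF gi[of y]]) (use xy in auto)
  qed auto
  moreover have "{0..x} \<union> {x..y} = {0..y}" using xy by auto
  ultimately show ?thesis using rep[of x] rep[of y] xy by simp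
qed

lemma set_integral_abs_le:
  fixes g :: "real \<Rightarrow> real"
  shows "\<bar>LINT s:A|lborel. g s\<bar> \<le> (LINT s:A|lborel. \<bar>g s\<bar>)"
proof -
  have "\<bar>LINT s:A|lborel. g s\<bar> = \<bar>integral\<^sup>L lborel (\<lambda>s. indicator A s * g s)\<bar>"
    unfolding set_lebesgue_integral_def by simp
  also have "\<dots> \<le> integral\<^sup>L lborel (\<lambda>s. \<bar>indicator A s * g s\<bar>)"
    by (rule integral_abs_bound)
  also have "\<dots> = (LINT s:A|lborel. \<bar>g s\<bar>)"
    unfolding set_lebesgue_integral_def by (simp add: abs_mult)
  finally show ?thesis .
qed

lemma half_le: "0 \<le> (a::real) \<Longrightarrow> a / 2 \<le> a" by simp

lemma abs3:
  fixes A B c :: real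
  assumes "0 \<le> c"
  shows "\<bar>A + B - c\<bar> \<le> \<bar>A\<bar> + \<bar>B\<bar> + c"
proof -
  have "\<bar>A + B - c\<bar> \<le> \<bar>A + B\<bar> + \<bar>c\<bar>" by (rule abs_triangle_ineq4)
  moreover have "\<bar>A + B\<bar> \<le> \<bar>A\<bar> + \<bar>B\<bar>" by (rule abs_triangle_ineq)
  moreover have "\<bar>c\<bar> = c" using assms by simp
  ultimately show ?thesis by linarith
qed

theorem theorem45:
  fixes \<omega> :: "'v::finite \<Rightarrow> 'v \<Rightarrow> real" and r \<epsilon> :: real and u0 :: "'v \<Rightarrow> real"
    and \<tau> :: "nat \<Rightarrow> real" and U :: "nat \<Rightarrow> nat \<Rightarrow> 'v \<Rightarrow> real"
    and uhat \<gamma> :: "real \<Rightarrow> 'v \<Rightarrow> real"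
  assumes "wgraph \<omega>" and "0 \<le> r" and "r \<le> 1" and "0 < \<epsilon>"
    and "u0 \<in> V01" and "u0 \<noteq> (\<lambda>_. 0)" and "u0 \<noteq> (\<lambda>_. 1)"
    and "\<And>n. 0 < \<tau> n" and "\<And>n. \<tau> n < \<epsilon>" and "decseq \<tau>" and "\<tau> \<longlonglongrightarrow> 0"
    and "\<And>n. semidiscrete \<omega> r \<epsilon> (\<tau> n) u0 (U n)"
    and "\<And>t i. 0 \<le> t \<Longrightarrow> (\<lambda>n. U n (nat \<lceil>t / \<tau> n\<rceil>) i) \<longlonglongrightarrow> uhat t i"
    and "ACsol \<omega> r \<epsilon> uhat \<gamma>" and "uhat 0 = u0"
  shows "(\<forall>s t. 0 \<le> s \<longrightarrow> s < t \<longrightarrow>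
            GL \<omega> r \<epsilon> (uhat s) - GL \<omega> r \<epsilon> (uhat t)
              \<ge> ereal (1 / (2 * (t - s)) * (normV \<omega> r (\<lambda>i. uhat s i - uhat t i))\<^sup>2))
       \<and> (\<forall>s t. 0 \<le> s \<longrightarrow> s \<le> t \<longrightarrow> GL \<omega> r \<epsilon> (uhat t) \<le> GL \<omega> r \<epsilon> (uhat s))"
proof -
  note wg = assms(1) and eps = assms(4) and AC = assms(14)
  define d where "d i = degr \<omega> r i" for i
  have d0: "0 \<le> d i" for i unfolding d_def by (rule degr_nonneg[OF wg])
  from AC have H1: "H1loc uhat" and cont: "\<And>i. continuous_on {0..} (\<lambda>t. uhat t i)"
    and Vu: "\<And>t. t \<ge> 0 \<Longrightarrow> uhat t \<in> V01"
    and AEq: "AE t in lborel. 0 < t \<longrightarrow> (\<exists>u'. (\<forall>i. ((\<lambda>s. uhat s i) has_real_derivative u' i) (at t))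
          \<and> \<gamma> t \<in> Bset (uhat t)
          \<and> (\<forall>i. \<epsilon> * u' i + \<epsilon> * lap \<omega> r (uhat t) i - uhat t i + avg \<omega> r (uhat t)
                 = \<gamma> t i - avg \<omega> r (\<gamma> t)))"
    unfolding ACsol_def by auto
  from H1 have "\<forall>i. \<exists>g. (\<forall>T\<ge>0. set_integrable lborel {0..T} g
        \<and> set_integrable lborel {0..T} (\<lambda>t. (g t)\<^sup>2))
      \<and> (\<forall>t\<ge>0. uhat t i = uhat 0 i + (LINT s:{0..t}|lborel. g s))"
    unfolding H1loc_def .
  then obtain G where G: "\<forall>i. (\<forall>T\<ge>0. set_integrable lborel {0..T} (G i)
        \<and> set_integrable lborel {0..T} (\<lambda>t. (G i t)\<^sup>2))
      \<and> (\<forall>t\<ge>0. uhat t i = uhat 0 i + (LINT s:{0..t}|lborel. G i s))"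
    using choice[of "\<lambda>i g. (\<forall>T\<ge>0. set_integrable lborel {0..T} g
        \<and> set_integrable lborel {0..T} (\<lambda>t. (g t)\<^sup>2))
      \<and> (\<forall>t\<ge>0. uhat t i = uhat 0 i + (LINT s:{0..t}|lborel. g s))"] by blast
  have Gi: "\<And>T. T \<ge> 0 \<Longrightarrow> set_integrable lborel {0..T} (G i)" for i using G by blast
  have Grep: "\<And>t. t \<ge> 0 \<Longrightarrow> (\<lambda>t. uhat t i) t = (\<lambda>t. uhat t i) 0 + (LINT s:{0..t}|lborel. G i s)" for i
    using G by blast
  have inc: "\<bar>uhat y i - uhat x i\<bar> \<le> (LINT s:{x..y}|lborel. \<bar>G i s\<bar>)" if "0 \<le> x" "x \<le> y" for i x y
    using inc_rep[of "G i" "\<lambda>t. uhat t i", OF Gi Grep that] set_integral_abs_le[of "{x..y}" "G i"]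
    by simp
  have step: "(\<Sum>i\<in>UNIV. d i * (uhat s i - uhat t i)^2) / (t - s) \<le> Qf \<omega> r \<epsilon> (uhat s) - Qf \<omega> r \<epsilon> (uhat t)"
    if st: "0 \<le> s" "s < t" for s t
  proof -
    define v where "v i = (uhat t i - uhat s i) / (t - s)" for i
    define V2 where "V2 = (\<Sum>i\<in>UNIV. d i * (v i)^2)"
    define \<psi> where "\<psi> = (\<lambda>y. Qf \<omega> r \<epsilon> (uhat y) + 2 * (\<Sum>i\<in>UNIV. d i * uhat y i * v i) - y * V2)"
    define L where "L i = deg \<omega> i + d i / (2 * \<epsilon>) + 2 * d i * \<bar>v i\<bar>" for i
    define k where "k \<tau> = (\<Sum>i\<in>UNIV. L i * \<bar>G i \<tau>\<bar>) + V2" for \<tau>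
    have V20: "0 \<le> V2" unfolding V2_def by (intro sum_nonneg mult_nonneg_nonneg d0) auto
    have L0: "0 \<le> L i" for i unfolding L_def using deg_nonneg[OF wg, of i] d0[of i] eps by simp
    have k0: "0 \<le> k x" for x unfolding k_def using L0 V20 by (intro add_nonneg_nonneg sum_nonneg mult_nonneg_nonneg) auto
    have Gst: "set_integrable lborel {x..y} (G i)" if "s \<le> x" "y \<le> t" for i x y
      by (rule set_integrable_subset[OF Gi[of t]]) (use st that in auto)
    have Lint: "set_integrable lborel {x..y} (\<lambda>\<tau>. L i * \<bar>G i \<tau>\<bar>)" if "s \<le> x" "y \<le> t" for i x y
      by (intro set_integrable_mult_right set_integrable_abs Gst that)
    have kint_gen: "set_integrable lborel {x..y} k" if "s \<le> x" "y \<le> t" for x y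
    proof -
      have "set_integrable lborel {x..y} (\<lambda>\<tau>. \<Sum>i\<in>UNIV. L i * \<bar>G i \<tau>\<bar>)"
        by (rule si_sum(1)) (use Lint that in auto)
      moreover have "set_integrable lborel {x..y} (\<lambda>\<tau>. V2)"
        by (intro borel_integrable_atLeastAtMost' continuous_on_const)
      ultimately show ?thesis unfolding k_def by (rule set_integral_add(1))
    qed
    have kint: "set_integrable lborel {s..t} k" by (rule kint_gen) auto
    have ci: "continuous_on {s..t} (\<lambda>y. uhat y i)" for i
      by (rule continuous_on_subset[OF cont]) (use st in auto)
    have cont_st: "continuous_on {s..t} \<psi>"
      unfolding \<psi>_def Qf_def by (intro continuous_intros ci) auto
    have bnd: "\<bar>\<psi> y - \<psi> x\<bar> \<le> (LINT \<tau>:{x..y}|lborel. k \<tau>)" if xy: "s \<le> x" "x \<le> y" "y \<le> t" for x y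
    proof -
      define \<delta> where "\<delta> i = uhat y i - uhat x i" for i
      have ux: "uhat x \<in> V01" "uhat y \<in> V01" using Vu st xy by auto
      have lip: "\<bar>Qf \<omega> r \<epsilon> (uhat y) - Qf \<omega> r \<epsilon> (uhat x)\<bar> \<le> (\<Sum>i\<in>UNIV. (deg \<omega> i + d i / (2 * \<epsilon>)) * \<bar>\<delta> i\<bar>)"
        using Qf_lip[OF wg eps ux(2) ux(1), of r] unfolding d_def \<delta>_def by simp
      have "2 * (\<Sum>i\<in>UNIV. d i * uhat y i * v i) - 2 * (\<Sum>i\<in>UNIV. d i * uhat x i * v i)
          = (\<Sum>i\<in>UNIV. 2 * d i * v i * \<delta> i)"
        unfolding \<delta>_def by (simp add: sum_distrib_left sum_subtractf[symmetric] algebra_simps)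
      then have lin: "\<bar>2 * (\<Sum>i\<in>UNIV. d i * uhat y i * v i) - 2 * (\<Sum>i\<in>UNIV. d i * uhat x i * v i)\<bar>
          \<le> (\<Sum>i\<in>UNIV. 2 * d i * \<bar>v i\<bar> * \<bar>\<delta> i\<bar>)"
        using d0 by (simp add: order_trans[OF sum_abs] abs_mult sum_mono)
      have "\<psi> y - \<psi> x = (Qf \<omega> r \<epsilon> (uhat y) - Qf \<omega> r \<epsilon> (uhat x))
          + (2 * (\<Sum>i\<in>UNIV. d i * uhat y i * v i) - 2 * (\<Sum>i\<in>UNIV. d i * uhat x i * v i)) - (y - x) * V2"
        unfolding \<psi>_def by (simp add: algebra_simps)
      moreover have c0: "0 \<le> (y - x) * V2" using xy V20 by simp
      ultimately have "\<bar>\<psi> y - \<psi> x\<bar> \<le> \<bar>Qf \<omega> r \<epsilon> (uhat y) - Qf \<omega> r \<epsilon> (uhat x)\<bar>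
          + \<bar>2 * (\<Sum>i\<in>UNIV. d i * uhat y i * v i) - 2 * (\<Sum>i\<in>UNIV. d i * uhat x i * v i)\<bar> + (y - x) * V2"
        using abs3 by presburger
      also have "\<dots> \<le> (\<Sum>i\<in>UNIV. (deg \<omega> i + d i / (2 * \<epsilon>)) * \<bar>\<delta> i\<bar>) + (\<Sum>i\<in>UNIV. 2 * d i * \<bar>v i\<bar> * \<bar>\<delta> i\<bar>) + (y - x) * V2"
        using lip lin by linarith
      also have "\<dots> = (\<Sum>i\<in>UNIV. L i * \<bar>\<delta> i\<bar>) + (y - x) * V2"
        unfolding L_def by (simp add: sum.distrib[symmetric] algebra_simps)
      also have "\<dots> \<le> (\<Sum>i\<in>UNIV. L i * (LINT \<tau>:{x..y}|lborel. \<bar>G i \<tau>\<bar>)) + (y - x) * V2"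
      proof -
        have "(\<Sum>i\<in>UNIV. L i * \<bar>\<delta> i\<bar>) \<le> (\<Sum>i\<in>UNIV. L i * (LINT \<tau>:{x..y}|lborel. \<bar>G i \<tau>\<bar>))"
        proof (rule sum_mono)
          fix i show "L i * \<bar>\<delta> i\<bar> \<le> L i * (LINT \<tau>:{x..y}|lborel. \<bar>G i \<tau>\<bar>)"
            using inc[of x y i] st xy L0[of i] unfolding \<delta>_def by (intro mult_left_mono) auto
        qed
        then show ?thesis by simp
      qed
      also have "\<dots> = (LINT \<tau>:{x..y}|lborel. k \<tau>)"
      proof -
        have "(LINT \<tau>:{x..y}|lborel. k \<tau>) = (LINT \<tau>:{x..y}|lborel. (\<Sum>i\<in>UNIV. L i * \<bar>G i \<tau>\<bar>)) + (LINT \<tau>:{x..y}|lborel. V2)"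
          unfolding k_def
        proof (rule set_integral_add(2))
          show "set_integrable lborel {x..y} (\<lambda>\<tau>. \<Sum>i\<in>UNIV. L i * \<bar>G i \<tau>\<bar>)"
            by (rule si_sum(1)) (use Lint xy in auto)
          show "set_integrable lborel {x..y} (\<lambda>\<tau>. V2)"
            by (intro borel_integrable_atLeastAtMost' continuous_on_const)
        qed
        also have "(LINT \<tau>:{x..y}|lborel. (\<Sum>i\<in>UNIV. L i * \<bar>G i \<tau>\<bar>)) = (\<Sum>i\<in>UNIV. LINT \<tau>:{x..y}|lborel. L i * \<bar>G i \<tau>\<bar>)"
          by (rule si_sum(2)) (use Lint xy in auto)
        also have "\<dots> = (\<Sum>i\<in>UNIV. L i * (LINT \<tau>:{x..y}|lborel. \<bar>G i \<tau>\<bar>))"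
          by simp
        also have "(LINT \<tau>:{x..y}|lborel. V2) = (y - x) * V2"
          using set_integral_const[of "{x..y}" lborel V2] xy by simp
        finally show ?thesis by simp
      qed
      finally show ?thesis .
    qed
    have ae: "AE x in lborel. s < x \<and> x < t \<longrightarrow> (\<exists>D. DERIV \<psi> x :> D \<and> D \<le> 0)"
      using AEq
    proof eventually_elim
      case (elim x)
      show ?case
      proof
        assume x: "s < x \<and> x < t"
        then have x0: "0 < x" using st by simp
        with elim obtain h where hder: "\<And>i. DERIV (\<lambda>s. uhat s i) x :> h i" and hB: "\<gamma> x \<in> Bset (uhat x)"
          and heq: "\<And>i. \<epsilon> * h i + \<epsilon> * lap \<omega> r (uhat x) i - uhat x i + avg \<omega> r (uhat x) = \<gamma> x i - avg \<omega> r (\<gamma> x)"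
          by blast
        have nb: "\<And>y. \<bar>x - y\<bar> < x \<Longrightarrow> uhat y \<in> V01" using Vu by auto
        have hb: "h i * \<gamma> x i = 0" for i
        proof -
          have ux: "0 \<le> uhat x i" "uhat x i \<le> 1" using Vu[of x] x0 unfolding V01_def by auto
          consider "uhat x i = 0" | "0 < uhat x i \<and> uhat x i < 1" | "uhat x i = 1" using ux by fastforce
          then show "h i * \<gamma> x i = 0"
          proof cases
            case 1
            have "h i = 0"
              by (rule DERIV_local_min[OF hder[of i] x0]) (use 1 nb in \<open>auto simp: V01_def\<close>)
            then show ?thesis by simp
          next
            case 2 then have "\<gamma> x i = 0" using hB unfolding Bset_def by auto
            then show ?thesis by simp
          next
            case 3
            have "h i = 0"
              by (rule DERIV_local_max[OF hder[of i] x0]) (use 3 nb in \<open>auto simp: V01_def\<close>)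
            then show ?thesis by simp
          qed
        qed
        have KI: "1/2 * (\<Sum>i\<in>UNIV. \<Sum>j\<in>UNIV. \<omega> i j * (uhat x j - uhat x i) * (h j - h i))
           + 1/\<epsilon> * (\<Sum>i\<in>UNIV. degr \<omega> r i * (h i * (1 - 2 * uhat x i) / 2))
           = - (\<Sum>i\<in>UNIV. degr \<omega> r i * (h i)^2)"
          by (rule key_identity[OF wg eps heq hb])
        have DQ: "DERIV (\<lambda>y. Qf \<omega> r \<epsilon> (uhat y)) x :> - (\<Sum>i\<in>UNIV. d i * (h i)^2)"
          using Qf_deriv[where U=uhat and x=x and h=h and \<omega>=\<omega> and r=r and \<epsilon>=\<epsilon>, OF hder] KI unfolding d_def by simp
        have Dl1: "DERIV (\<lambda>y. d i * uhat y i * v i) x :> d i * h i * v i" for i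
          by (auto intro!: derivative_eq_intros hder)
        have Dlin: "DERIV (\<lambda>y. 2 * (\<Sum>i\<in>UNIV. d i * uhat y i * v i)) x :> 2 * (\<Sum>i\<in>UNIV. d i * h i * v i)"
          by (intro DERIV_cmult DERIV_sum Dl1)
        have Dlast: "DERIV (\<lambda>y. y * V2) x :> V2" by (auto intro!: derivative_eq_intros)
        have Dpsi: "DERIV \<psi> x :> - (\<Sum>i\<in>UNIV. d i * (h i)^2) + 2 * (\<Sum>i\<in>UNIV. d i * h i * v i) - V2"
          unfolding \<psi>_def by (intro DERIV_diff DERIV_add DQ Dlin Dlast)
        have "- (\<Sum>i\<in>UNIV. d i * (h i)^2) + 2 * (\<Sum>i\<in>UNIV. d i * h i * v i) - V2 = - (\<Sum>i\<in>UNIV. d i * (h i - v i)^2)"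
          unfolding V2_def by (simp add: power2_eq_square algebra_simps sum.distrib sum_subtractf sum_distrib_left sum_negf)
        moreover have "0 \<le> (\<Sum>i\<in>UNIV. d i * (h i - v i)^2)" by (intro sum_nonneg mult_nonneg_nonneg d0) auto
        ultimately show "\<exists>D. DERIV \<psi> x :> D \<and> D \<le> 0" using Dpsi by (intro exI[of _ "- (\<Sum>i\<in>UNIV. d i * (h i - v i)^2)"]) auto
      qed
    qed
    have "\<psi> t \<le> \<psi> s" by (rule MONO[OF st(2) cont_st kint _ bnd ae]) (use k0 in auto)
    then have ineq: "Qf \<omega> r \<epsilon> (uhat t) + 2 * (\<Sum>i\<in>UNIV. d i * uhat t i * v i) - t * V2
        \<le> Qf \<omega> r \<epsilon> (uhat s) + 2 * (\<Sum>i\<in>UNIV. d i * uhat s i * v i) - s * V2"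
      unfolding \<psi>_def by simp
    have tv: "uhat t i - uhat s i = (t - s) * v i" for i unfolding v_def using st by simp
    have "(\<Sum>i\<in>UNIV. d i * uhat t i * v i) - (\<Sum>i\<in>UNIV. d i * uhat s i * v i) = (\<Sum>i\<in>UNIV. d i * (uhat t i - uhat s i) * v i)"
      by (simp add: sum_subtractf[symmetric] algebra_simps)
    also have "\<dots> = (t - s) * V2" unfolding V2_def tv by (simp add: sum_distrib_left power2_eq_square algebra_simps)
    finally have e1: "(\<Sum>i\<in>UNIV. d i * uhat t i * v i) - (\<Sum>i\<in>UNIV. d i * uhat s i * v i) = (t - s) * V2" .
    have "(\<Sum>i\<in>UNIV. d i * (uhat s i - uhat t i)^2) = (\<Sum>i\<in>UNIV. d i * ((t - s) * v i)^2)"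
    proof (intro sum.cong refl)
      fix i
      have "(uhat s i - uhat t i)^2 = (uhat t i - uhat s i)^2" by (rule power2_commute)
      then show "d i * (uhat s i - uhat t i)^2 = d i * ((t - s) * v i)^2" using tv[of i] by simp
    qed
    also have "\<dots> = (\<Sum>i\<in>UNIV. (t - s)^2 * (d i * (v i)^2))"
      by (intro sum.cong refl) (simp only: power_mult_distrib mult.assoc mult.left_commute)
    also have "\<dots> = (t - s)^2 * V2" unfolding V2_def by (simp only: sum_distrib_left)
    finally have e2: "(\<Sum>i\<in>UNIV. d i * (uhat s i - uhat t i)^2) / (t - s) = (t - s) * V2"
      using st by (simp add: power2_eq_square)
    show ?thesis using ineq e1 e2 by (simp add: algebra_simps)
  qed
  have GLq: "GL \<omega> r \<epsilon> (uhat s) = ereal (Qf \<omega> r \<epsilon> (uhat s))" if "0 \<le> s" for s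
    using GL_Qf[OF wg Vu[OF that]] .
  have nv: "(normV \<omega> r (\<lambda>i. uhat s i - uhat t i))^2 = (\<Sum>i\<in>UNIV. d i * (uhat s i - uhat t i)^2)" for s t
    unfolding d_def by (rule normV_sq[OF wg])
  have S0: "0 \<le> (\<Sum>i\<in>UNIV. d i * (uhat s i - uhat t i)^2)" for s t
    by (intro sum_nonneg mult_nonneg_nonneg d0) auto
  show ?thesis
  proof (intro conjI allI impI)
    fix s t :: real assume st: "0 \<le> s" "s < t"
    have "1 / (2 * (t - s)) * (\<Sum>i\<in>UNIV. d i * (uhat s i - uhat t i)^2) \<le> (\<Sum>i\<in>UNIV. d i * (uhat s i - uhat t i)^2) / (t - s)"
    proof -
      have a: "0 \<le> (\<Sum>i\<in>UNIV. d i * (uhat s i - uhat t i)^2) / (t - s)" using st S0[of s t] by simp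
      have b: "1 / (2 * (t - s)) * (\<Sum>i\<in>UNIV. d i * (uhat s i - uhat t i)^2) = ((\<Sum>i\<in>UNIV. d i * (uhat s i - uhat t i)^2) / (t - s)) / 2"
        by simp
      show ?thesis unfolding b by (rule half_le[OF a])
    qed
    also have "\<dots> \<le> Qf \<omega> r \<epsilon> (uhat s) - Qf \<omega> r \<epsilon> (uhat t)" by (rule step[OF st])
    finally have fin: "1 / (2 * (t - s)) * (\<Sum>i\<in>UNIV. d i * (uhat s i - uhat t i)^2) \<le> Qf \<omega> r \<epsilon> (uhat s) - Qf \<omega> r \<epsilon> (uhat t)" .
    have t0: "0 \<le> t" using st by simp
    show "GL \<omega> r \<epsilon> (uhat s) - GL \<omega> r \<epsilon> (uhat t) \<ge> ereal (1 / (2 * (t - s)) * (normV \<omega> r (\<lambda>i. uhat s i - uhat t i))\<^sup>2)"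
      unfolding nv GLq[OF st(1)] GLq[OF t0] using fin by simp
  next
    fix s t :: real assume st: "0 \<le> s" "s \<le> t"
    show "GL \<omega> r \<epsilon> (uhat t) \<le> GL \<omega> r \<epsilon> (uhat s)"
    proof (cases "s = t")
      case True then show ?thesis by simp
    next
      case False
      then have st': "s < t" using st by simp
      have "0 \<le> (\<Sum>i\<in>UNIV. d i * (uhat s i - uhat t i)^2) / (t - s)" using S0[of s t] st' by simp
      also have "\<dots> \<le> Qf \<omega> r \<epsilon> (uhat s) - Qf \<omega> r \<epsilon> (uhat t)" by (rule step[OF st(1) st'])
      finally have "0 \<le> Qf \<omega> r \<epsilon> (uhat s) - Qf \<omega> r \<epsilon> (uhat t)" .
      moreover have t0: "0 \<le> t" using st by simp
      ultimately show ?thesis unfolding GLq[OF st(1)] GLq[OF t0] by simp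
    qed
  qed
qed

end
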